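(* Let $K$ be a field and $X$ a finite connected poset. For every Lie automorphism $\varphi$ of $I(X,K)$, the map $\widetilde\varphi$ is a bijective $K$-linear map of $I(X,K)$, and $\varphi\mapsto\widetilde\varphi$ is a group homomorphism from $\mathrm{LAut}(I(X,K))$ to $\mathrm{GL}(I(X,K))$, i.e. $\widetilde{\varphi\circ\psi}=\widetilde\varphi\circ\widetilde\psi$.
   Context: $I(X,K)$ is the incidence algebra: functions $f:X\times X\to K$ with $f(x,y)=0$ unless $x\le y$, product $(fg)(x,y)=\sum_{x\le t\le y}f(x,t)g(t,y)$; $e_{xy}$ ($x\le y$) is the basis element equal to $1$ at $(x,y)$ and $0$ elsewhere. $\mathrm{LAut}(I(X,K))$ is the group of bijective linear maps preserving $[f,g]=fg-gf$; $\mathrm{GL}(I(X,K))$ is the group of bijective $K$-linear maps. Let $l(\lfloor x,y\rfloor)$ be the maximum length of a chain in $\{z:x\le z\le y\}$, $L_i=\mathrm{span}_K\{e_{xy}: l(\lfloor x,y\rfloor)=i\}$ ($i\ge 0$), so $I(X,K)=\bigoplus_i L_i$. For $\varphi\in\mathrm{LAut}(I(X,K))$, $\widetilde\varphi$ is the linear map sending $e_{xy}\in L_i$ to the $L_i$-component of $\varphi(e_{xy})$ (one has $\varphi(e_{xy})-\widetilde\varphi(e_{xy})\in\bigoplus_{k>i}L_k$). Connected means any two elements are joined by a sequence in which consecutive elements are in a covering relation. *)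

theory Defs
  imports Main
begin

definition inc_alg :: "('a::{order,finite} \<Rightarrow> 'a \<Rightarrow> 'k::field) set" where
  "inc_alg = {f. \<forall>x y. \<not> x \<le> y \<longrightarrow> f x y = 0}"

definition inc_mult :: "('a::{order,finite} \<Rightarrow> 'a \<Rightarrow> 'k::field) \<Rightarrow> ('a \<Rightarrow> 'a \<Rightarrow> 'k) \<Rightarrow> ('a \<Rightarrow> 'a \<Rightarrow> 'k)" where
  "inc_mult f g = (\<lambda>x y. \<Sum>t\<in>{t. x \<le> t \<and> t \<le> y}. f x t * g t y)"

definition inc_add :: "('a \<Rightarrow> 'a \<Rightarrow> 'k::field) \<Rightarrow> ('a \<Rightarrow> 'a \<Rightarrow> 'k) \<Rightarrow> ('a \<Rightarrow> 'a \<Rightarrow> 'k)" where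
  "inc_add f g = (\<lambda>x y. f x y + g x y)"

definition inc_smult :: "'k::field \<Rightarrow> ('a \<Rightarrow> 'a \<Rightarrow> 'k) \<Rightarrow> ('a \<Rightarrow> 'a \<Rightarrow> 'k)" where
  "inc_smult c f = (\<lambda>x y. c * f x y)"

definition inc_comm :: "('a::{order,finite} \<Rightarrow> 'a \<Rightarrow> 'k::field) \<Rightarrow> ('a \<Rightarrow> 'a \<Rightarrow> 'k) \<Rightarrow> ('a \<Rightarrow> 'a \<Rightarrow> 'k)" where
  "inc_comm f g = (\<lambda>x y. inc_mult f g x y - inc_mult g f x y)"

definition inc_e :: "'a \<Rightarrow> 'a \<Rightarrow> ('a \<Rightarrow> 'a \<Rightarrow> 'k::field)" where
  "inc_e x y = (\<lambda>u v. if u = x \<and> v = y then 1 else 0)"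

definition inc_linear :: "(('a::{order,finite} \<Rightarrow> 'a \<Rightarrow> 'k::field) \<Rightarrow> ('a \<Rightarrow> 'a \<Rightarrow> 'k)) \<Rightarrow> bool" where
  "inc_linear \<phi> \<longleftrightarrow>
     (\<forall>f\<in>inc_alg. \<forall>g\<in>inc_alg. \<phi> (inc_add f g) = inc_add (\<phi> f) (\<phi> g)) \<and>
     (\<forall>c. \<forall>f\<in>inc_alg. \<phi> (inc_smult c f) = inc_smult c (\<phi> f))"

definition inc_GL :: "(('a::{order,finite} \<Rightarrow> 'a \<Rightarrow> 'k::field) \<Rightarrow> ('a \<Rightarrow> 'a \<Rightarrow> 'k)) set" where
  "inc_GL = {\<phi>. inc_linear \<phi> \<and> bij_betw \<phi> inc_alg inc_alg}"

definition inc_LAut :: "(('a::{order,finite} \<Rightarrow> 'a \<Rightarrow> 'k::field) \<Rightarrow> ('a \<Rightarrow> 'a \<Rightarrow> 'k)) set" where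
  "inc_LAut = {\<phi>. \<phi> \<in> inc_GL \<and>
      (\<forall>f\<in>inc_alg. \<forall>g\<in>inc_alg. \<phi> (inc_comm f g) = inc_comm (\<phi> f) (\<phi> g))}"

definition int_len :: "'a::{order,finite} \<Rightarrow> 'a \<Rightarrow> nat" where
  "int_len x y = Max {card C - 1 | C. C \<subseteq> {z. x \<le> z \<and> z \<le> y} \<and>
                         (\<forall>a\<in>C. \<forall>b\<in>C. a \<le> b \<or> b \<le> a)}"

text \<open>Projection onto L_i = span{e_xy : l(\<lfloor>x,y\<rfloor>) = i}.\<close>
definition inc_proj :: "nat \<Rightarrow> ('a::{order,finite} \<Rightarrow> 'a \<Rightarrow> 'k::field) \<Rightarrow> ('a \<Rightarrow> 'a \<Rightarrow> 'k)" where
  "inc_proj i h = (\<lambda>u v. if u \<le> v \<and> int_len u v = i then h u v else 0)"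

text \<open>\<phi>~ : the linear map sending e_xy (in L_i, i = l(\<lfloor>x,y\<rfloor>)) to the
  L_i-component of \<phi>(e_xy), extended linearly to I(X,K).\<close>
definition tilde :: "(('a::{order,finite} \<Rightarrow> 'a \<Rightarrow> 'k::field) \<Rightarrow> ('a \<Rightarrow> 'a \<Rightarrow> 'k))
                     \<Rightarrow> ('a \<Rightarrow> 'a \<Rightarrow> 'k) \<Rightarrow> ('a \<Rightarrow> 'a \<Rightarrow> 'k)" where
  "tilde \<phi> f = (\<lambda>u v. \<Sum>p\<in>{(x, y). x \<le> y}.
      f (fst p) (snd p) * inc_proj (int_len (fst p) (snd p)) (\<phi> (inc_e (fst p) (snd p))) u v)"

definition covers :: "'a::order \<Rightarrow> 'a \<Rightarrow> bool" where
  "covers x y \<longleftrightarrow> x < y \<and> \<not> (\<exists>z. x < z \<and> z < y)"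

definition poset_connected :: "'a::order itself \<Rightarrow> bool" where
  "poset_connected _ \<longleftrightarrow>
     (\<forall>x y::'a. (\<lambda>a b. covers a b \<or> covers b a)\<^sup>*\<^sup>* x y)"

end

theory Submission
  imports Defs
begin


lemma inc_algD: "f \<in> inc_alg \<Longrightarrow> \<not> x \<le> y \<Longrightarrow> f x y = 0"
  by (simp add: inc_alg_def)
lemma add_closed: "f \<in> inc_alg \<Longrightarrow> g \<in> inc_alg \<Longrightarrow> inc_add f g \<in> inc_alg"
  by (simp add: inc_alg_def inc_add_def)
lemma smult_closed: "f \<in> inc_alg \<Longrightarrow> inc_smult c f \<in> inc_alg"
  by (simp add: inc_alg_def inc_smult_def)
lemma comm_closed: "inc_comm (f::'a::{order,finite} \<Rightarrow> 'a \<Rightarrow> 'k::field) g \<in> inc_alg"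
  unfolding inc_alg_def
proof (intro CollectI allI impI)
  fix x y :: 'a assume "\<not> x \<le> y"
  then have e: "{t. x \<le> t \<and> t \<le> y} = {}" using order_trans by blast
  show "inc_comm f g x y = 0" unfolding inc_comm_def inc_mult_def e by simp
qed
lemma e_in: "(x::'a::{order,finite}) \<le> y \<Longrightarrow> (inc_e x y :: 'a \<Rightarrow> 'a \<Rightarrow> 'k::field) \<in> inc_alg"
  by (simp add: inc_alg_def inc_e_def)

definition chs :: "'a::{order,finite} \<Rightarrow> 'a \<Rightarrow> 'a set set" where
  "chs x y = {C. C \<subseteq> {z. x \<le> z \<and> z \<le> y} \<and> (\<forall>a\<in>C. \<forall>b\<in>C. a \<le> b \<or> b \<le> a)}"

lemma int_len_alt: "int_len x y = Max ((\<lambda>C. card C - 1) ` chs x y)"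
  unfolding int_len_def chs_def by (rule arg_cong[where f=Max]) auto

lemma fin_chs: "finite ((\<lambda>C. card C - 1) ` chs (x::'a::{order,finite}) y)"
  by (rule finite_imageI) (rule finite)

lemma len_ge: "C \<in> chs x y \<Longrightarrow> card C - 1 \<le> int_len x y"
  unfolding int_len_alt by (rule Max_ge[OF fin_chs]) (rule imageI)

lemma len_attain: "\<exists>C\<in>chs x y. int_len x y = card C - 1"
proof -
  have "{} \<in> chs x y" by (simp add: chs_def)
  then have ne: "(\<lambda>C. card C - 1) ` chs x y \<noteq> {}" by (simp only: image_is_empty) (rule ex_in_conv[THEN iffD1, THEN not_sym[OF _]] ; fail | auto)
  have "int_len x y \<in> (\<lambda>C. card C - 1) ` chs x y"
    unfolding int_len_alt by (rule Max_in[OF fin_chs ne])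
  then obtain C where "C \<in> chs x y" "int_len x y = card C - 1" by (rule imageE) simp
  then show ?thesis by blast
qed

lemma len_pos: "(x::'a::{order,finite}) < y \<Longrightarrow> 1 \<le> int_len x y"
proof -
  assume "x < y"
  then have "{x,y} \<in> chs x y" by (auto simp: chs_def)
  from len_ge[OF this] \<open>x<y\<close> show ?thesis by simp
qed

lemma len_refl: "int_len (x::'a::{order,finite}) x = 0"
proof -
  obtain C where C: "C \<in> chs x x" "int_len x x = card C - 1" using len_attain by blast
  then have "C \<subseteq> {x}" unfolding chs_def using order.antisym by blast
  then have "card C \<le> 1" using card_mono[of "{x}" C] by simp
  then show ?thesis using C by simp
qed

lemma len_left: assumes "(u::'a::{order,finite}) < t" "t \<le> v" shows "Suc (int_len t v) \<le> int_len u v"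
proof -
  obtain C where C: "C \<in> chs t v" "int_len t v = card C - 1" using len_attain by blast
  show ?thesis
  proof (cases "C = {}")
    case True
    then show ?thesis using C len_pos[of u v] assms by simp
  next
    case False
    have cc: "\<forall>c\<in>C. t \<le> c \<and> c \<le> v" and ch: "\<forall>a\<in>C. \<forall>b\<in>C. a \<le> b \<or> b \<le> a"
      using C(1) unfolding chs_def by blast+
    have uc: "\<forall>c\<in>C. u \<le> c" using cc assms(1) by (meson order.trans less_imp_le)
    have "insert u C \<in> chs u v" unfolding chs_def using cc ch uc assms by auto
    moreover have "u \<notin> C" using cc assms(1) by auto
    moreover have "card C \<ge> 1" using False by (simp add: Suc_leI card_gt_0_iff)
    ultimately show ?thesis using len_ge[of "insert u C" u v] C by simp
  qed
qed

lemma len_right: assumes "(u::'a::{order,finite}) \<le> t" "t < v" shows "Suc (int_len u t) \<le> int_len u v"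
proof -
  obtain C where C: "C \<in> chs u t" "int_len u t = card C - 1" using len_attain by blast
  show ?thesis
  proof (cases "C = {}")
    case True
    then show ?thesis using C len_pos[of u v] assms by simp
  next
    case False
    have cc: "\<forall>c\<in>C. u \<le> c \<and> c \<le> t" and ch: "\<forall>a\<in>C. \<forall>b\<in>C. a \<le> b \<or> b \<le> a"
      using C(1) unfolding chs_def by blast+
    have uc: "\<forall>c\<in>C. c \<le> v" using cc assms(2) by (meson order.trans less_imp_le)
    have "insert v C \<in> chs u v" unfolding chs_def using cc ch uc assms by auto
    moreover have "v \<notin> C" using cc assms(2) by auto
    moreover have "card C \<ge> 1" using False by (simp add: Suc_leI card_gt_0_iff)
    ultimately show ?thesis using len_ge[of "insert v C" u v] C by simp
  qed
qed

lemma len_split: assumes "(x::'a::{order,finite}) \<le> y" "Suc i \<le> int_len x y"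
  shows "\<exists>z. x < z \<and> z \<le> y \<and> i \<le> int_len z y"
proof -
  obtain C where C: "C \<in> chs x y" "int_len x y = card C - 1" using len_attain by blast
  have cC: "card C \<ge> 2" using C assms by simp
  then have "C \<noteq> {}" by auto
  then obtain m where m: "m \<in> C" "\<forall>b\<in>C. b \<le> m \<longrightarrow> m = b"
    using finite_has_minimal[of C] by auto
  have cC': "card (C - {m}) = card C - 1" using m by simp
  then have "C - {m} \<noteq> {}" using cC card_mono[of "{m}" C] by auto
  then obtain z where z: "z \<in> C - {m}" "\<forall>b\<in>C - {m}. b \<le> z \<longrightarrow> z = b"
    using finite_has_minimal[of "C - {m}"] by auto
  have ch: "\<forall>a\<in>C. \<forall>b\<in>C. a \<le> b \<or> b \<le> a" and sub: "C \<subseteq> {z. x \<le> z \<and> z \<le> y}"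
    using C(1) by (auto simp: chs_def)
  have "m < z" using ch m z by (metis DiffD1 DiffD2 insertCI order_less_le)
  moreover have "x \<le> m" "z \<le> y" using sub m z by auto
  ultimately have xz: "x < z" by simp
  have "z \<le> b \<and> b \<le> y" if "b \<in> C - {m}" for b
  proof -
    have "b \<le> z \<or> z \<le> b" using ch that z(1) by blast
    then have "z \<le> b" using z(2) that by auto
    then show ?thesis using sub that by auto
  qed
  then have "C - {m} \<in> chs z y" using ch unfolding chs_def by blast
  from len_ge[OF this] cC' cC C assms have "i \<le> int_len z y" by simp
  with xz \<open>z \<le> y\<close> show ?thesis by blast
qed




definition Fi :: "nat \<Rightarrow> ('a::{order,finite} \<Rightarrow> 'a \<Rightarrow> 'k::field) set" where
  "Fi i = {f \<in> inc_alg. \<forall>u v. f u v \<noteq> 0 \<longrightarrow> i \<le> int_len u v}"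

lemma comm_F1:
  fixes f g :: "'a::{order,finite} \<Rightarrow> 'a \<Rightarrow> 'k::field"
  assumes "f \<in> inc_alg" "g \<in> inc_alg"
  shows "inc_comm f g \<in> Fi 1"
  unfolding Fi_def
proof (intro CollectI conjI comm_closed allI impI)
  fix u v assume nz: "inc_comm f g u v \<noteq> 0"
  have "u \<le> v" using nz comm_closed[of f g] inc_algD by blast
  moreover have "u \<noteq> v"
  proof
    assume "u = v"
    then have e: "{t. u \<le> t \<and> t \<le> v} = {u}" by (auto intro: order.antisym)
    have "inc_comm f g u v = 0" unfolding inc_comm_def inc_mult_def e using \<open>u = v\<close> by simp
    with nz show False by simp
  qed
  ultimately have "u < v" by (simp add: order_less_le)
  then show "1 \<le> int_len u v" by (rule len_pos)
qed

lemma comm_step: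
  fixes f g :: "'a::{order,finite} \<Rightarrow> 'a \<Rightarrow> 'k::field"
  assumes f: "f \<in> Fi 1" and g: "g \<in> Fi i"
  shows "inc_comm f g \<in> Fi (Suc i)"
  unfolding Fi_def
proof (intro CollectI conjI comm_closed allI impI)
  fix u v assume nz: "inc_comm f g u v \<noteq> 0"
  have fa: "f \<in> inc_alg" "\<And>a b. f a b \<noteq> 0 \<Longrightarrow> 1 \<le> int_len a b" using f by (auto simp: Fi_def)
  have ga: "g \<in> inc_alg" "\<And>a b. g a b \<noteq> 0 \<Longrightarrow> i \<le> int_len a b" using g by (auto simp: Fi_def)
  have "inc_mult f g u v \<noteq> 0 \<or> inc_mult g f u v \<noteq> 0" using nz by (auto simp: inc_comm_def)
  then show "Suc i \<le> int_len u v"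
  proof
    assume "inc_mult f g u v \<noteq> 0"
    then obtain t where t: "u \<le> t \<and> t \<le> v" "f u t * g t v \<noteq> 0"
      unfolding inc_mult_def by (auto elim: sum.not_neutral_contains_not_neutral)
    then have "f u t \<noteq> 0" "g t v \<noteq> 0" by auto
    then have "1 \<le> int_len u t" "i \<le> int_len t v" using fa ga by auto
    then have "u < t" using t len_refl[of u] by (metis order_le_less not_one_le_zero)
    then show ?thesis using len_left[of u t v] t \<open>i \<le> int_len t v\<close> by simp
  next
    assume "inc_mult g f u v \<noteq> 0"
    then obtain t where t: "u \<le> t \<and> t \<le> v" "g u t * f t v \<noteq> 0"
      unfolding inc_mult_def by (auto elim: sum.not_neutral_contains_not_neutral)
    then have "g u t \<noteq> 0" "f t v \<noteq> 0" by auto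
    then have "i \<le> int_len u t" "1 \<le> int_len t v" using fa ga by auto
    then have "t < v" using t len_refl[of t] by (metis order_le_less not_one_le_zero)
    then show ?thesis using len_right[of u t v] t \<open>i \<le> int_len u t\<close> by simp
  qed
qed

lemma e_mult1:
  fixes x y z a b :: "'a::{order,finite}"
  assumes "x \<le> z" "z \<le> y"
  shows "inc_mult (inc_e x z) (inc_e z y) a b = (inc_e x y a b :: 'k::field)"
proof -
  have "inc_mult (inc_e x z) (inc_e z y) a b =
    (\<Sum>t\<in>{t. a \<le> t \<and> t \<le> b}. if t = z then (if a = x \<and> b = y then 1 else 0) else (0::'k))"
    unfolding inc_mult_def inc_e_def by (rule sum.cong) auto
  also have "\<dots> = inc_e x y a b"
    using assms by (simp add: sum.delta inc_e_def)
  finally show ?thesis .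
qed

lemma e_mult2:
  fixes x y z a b :: "'a::{order,finite}"
  assumes "x \<noteq> y"
  shows "inc_mult (inc_e z y) (inc_e x z) a b = (0 :: 'k::field)"
  unfolding inc_mult_def inc_e_def using assms by (intro sum.neutral) auto

lemma e_comm:
  assumes "(x::'a::{order,finite}) \<le> z" "z \<le> y" "x \<noteq> y"
  shows "inc_comm (inc_e x z) (inc_e z y) = (inc_e x y :: 'a \<Rightarrow> 'a \<Rightarrow> 'k::field)"
  unfolding inc_comm_def
  by (intro ext, subst e_mult1[OF assms(1,2)], subst e_mult2[OF assms(3)], simp)

lemma expand:
  fixes \<phi> :: "('a::{order,finite} \<Rightarrow> 'a \<Rightarrow> 'k::field) \<Rightarrow> ('a \<Rightarrow> 'a \<Rightarrow> 'k)"
  assumes lin: "inc_linear \<phi>" and f: "f \<in> inc_alg"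
  shows "\<phi> f u v = (\<Sum>p\<in>{(x, y). x \<le> y}. f (fst p) (snd p) * \<phi> (inc_e (fst p) (snd p)) u v)"
proof -
  have add: "\<And>f g. f \<in> inc_alg \<Longrightarrow> g \<in> inc_alg \<Longrightarrow> \<phi> (inc_add f g) = inc_add (\<phi> f) (\<phi> g)"
   and sm: "\<And>c f. f \<in> inc_alg \<Longrightarrow> \<phi> (inc_smult c f) = inc_smult c (\<phi> f)"
    using lin unfolding inc_linear_def by blast+
  have "\<forall>f\<in>inc_alg. (\<forall>a b. (a, b) \<notin> S \<longrightarrow> f a b = 0) \<longrightarrow>
     (\<forall>u v. \<phi> f u v = (\<Sum>p\<in>S. f (fst p) (snd p) * \<phi> (inc_e (fst p) (snd p)) u v))"
    if "S \<subseteq> {(x, y). x \<le> y}" for S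
    using finite[of S] that
  proof (induction S rule: finite_induct)
    case empty
    show ?case
    proof (intro ballI impI allI)
      fix f :: "'a \<Rightarrow> 'a \<Rightarrow> 'k" and u v assume "f \<in> inc_alg" "\<forall>a b. (a, b) \<notin> {} \<longrightarrow> f a b = 0"
      then have z: "\<And>a b. f a b = 0" by simp
      have f0: "inc_smult 0 f = f" by (simp add: inc_smult_def z fun_eq_iff)
      have "\<phi> f u v = \<phi> (inc_smult 0 f) u v" by (simp only: f0)
      also have "\<dots> = inc_smult 0 (\<phi> f) u v" using sm[OF \<open>f \<in> inc_alg\<close>] by simp
      finally show "\<phi> f u v = (\<Sum>p\<in>{}. f (fst p) (snd p) * \<phi> (inc_e (fst p) (snd p)) u v)"
        by (simp add: inc_smult_def)
    qed
  next
    case (insert p S)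
    show ?case
    proof (intro ballI impI allI)
      fix f :: "'a \<Rightarrow> 'a \<Rightarrow> 'k" and u v
      assume fa: "f \<in> inc_alg" and sup: "\<forall>a b. (a, b) \<notin> insert p S \<longrightarrow> f a b = 0"
      define g where "g = (\<lambda>a b. if (a, b) = p then 0 else f a b)"
      have pP: "fst p \<le> snd p" using insert.prems by auto
      have ga: "g \<in> inc_alg" using fa unfolding g_def inc_alg_def by simp
      have gs: "\<forall>a b. (a, b) \<notin> S \<longrightarrow> g a b = 0" using sup unfolding g_def by simp
      have ea: "inc_e (fst p) (snd p) \<in> inc_alg" using e_in pP by blast
      have feq: "f = inc_add g (inc_smult (f (fst p) (snd p)) (inc_e (fst p) (snd p)))"
        unfolding g_def inc_add_def inc_smult_def inc_e_def by (intro ext) (auto simp: prod_eq_iff)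
      have "\<phi> f = inc_add (\<phi> g) (inc_smult (f (fst p) (snd p)) (\<phi> (inc_e (fst p) (snd p))))"
        by (subst feq, subst add[OF ga smult_closed[OF ea]], subst sm[OF ea]) (rule refl)
      then have "\<phi> f u v = \<phi> g u v + f (fst p) (snd p) * \<phi> (inc_e (fst p) (snd p)) u v"
        by (simp add: inc_add_def inc_smult_def)
      also have "\<phi> g u v = (\<Sum>q\<in>S. g (fst q) (snd q) * \<phi> (inc_e (fst q) (snd q)) u v)"
        using insert.IH insert.prems ga gs by blast
      also have "\<dots> = (\<Sum>q\<in>S. f (fst q) (snd q) * \<phi> (inc_e (fst q) (snd q)) u v)"
        using insert.hyps by (intro sum.cong) (auto simp: g_def)
      finally show "\<phi> f u v = (\<Sum>q\<in>insert p S. f (fst q) (snd q) * \<phi> (inc_e (fst q) (snd q)) u v)"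
        using insert.hyps by (simp add: add.commute)
    qed
  qed
  from this[OF subset_refl] f show ?thesis by (auto simp: inc_alg_def)
qed




lemma LAutD:
  fixes \<phi> :: "('a::{order,finite} \<Rightarrow> 'a \<Rightarrow> 'k::field) \<Rightarrow> ('a \<Rightarrow> 'a \<Rightarrow> 'k)"
  assumes "\<phi> \<in> inc_LAut"
  shows "inc_linear \<phi>" "bij_betw \<phi> inc_alg inc_alg"
    "\<And>f g. f \<in> inc_alg \<Longrightarrow> g \<in> inc_alg \<Longrightarrow> \<phi> (inc_comm f g) = inc_comm (\<phi> f) (\<phi> g)"
  using assms unfolding inc_LAut_def inc_GL_def by blast+

lemma LAut_in:
  fixes \<phi> :: "('a::{order,finite} \<Rightarrow> 'a \<Rightarrow> 'k::field) \<Rightarrow> ('a \<Rightarrow> 'a \<Rightarrow> 'k)"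
  assumes "\<phi> \<in> inc_LAut" "f \<in> inc_alg"
  shows "\<phi> f \<in> inc_alg"
  using LAutD(2)[OF assms(1)] assms(2) bij_betwE by blast

lemma key_ind:
  fixes \<phi> :: "('a::{order,finite} \<Rightarrow> 'a \<Rightarrow> 'k::field) \<Rightarrow> ('a \<Rightarrow> 'a \<Rightarrow> 'k)"
  assumes L: "\<phi> \<in> inc_LAut"
  shows "\<forall>x y. x \<le> y \<longrightarrow> i \<le> int_len x y \<longrightarrow> \<phi> (inc_e x y) \<in> Fi i"
proof (induction i)
  case 0
  show ?case using LAut_in[OF L e_in] by (auto simp: Fi_def)
next
  case (Suc i)
  show ?case
  proof (intro allI impI)
    fix x y :: 'a assume xy: "x \<le> y" and li: "Suc i \<le> int_len x y"
    obtain z where z: "x < z" "z \<le> y" "i \<le> int_len z y" using len_split[OF xy li] by blast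
    have xny: "x \<noteq> y" using z by (metis order.strict_trans2 order.irrefl)
    have xz: "x \<le> z" using z by simp
    have xnz: "x \<noteq> z" using z by simp
    have e1: "inc_comm (inc_e x x) (inc_e x z) = (inc_e x z :: 'a \<Rightarrow> 'a \<Rightarrow> 'k)"
      using e_comm[OF order.refl xz xnz] .
    have "\<phi> (inc_e x z) = inc_comm (\<phi> (inc_e x x)) (\<phi> (inc_e x z))"
      using LAutD(3)[OF L e_in[OF order.refl[of x]] e_in[OF xz]] e1 by simp
    also have "\<dots> \<in> Fi 1"
      by (rule comm_F1) (rule LAut_in[OF L e_in], simp add: xz)+
    finally have F1: "\<phi> (inc_e x z) \<in> Fi 1" .
    have F2: "\<phi> (inc_e z y) \<in> Fi i" using Suc.IH z by blast
    have "\<phi> (inc_e x y) = inc_comm (\<phi> (inc_e x z)) (\<phi> (inc_e z y))"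
      using LAutD(3)[OF L e_in[OF xz] e_in[OF z(2)]] e_comm[OF xz z(2) xny, where 'k='k] by simp
    also have "\<dots> \<in> Fi (Suc i)" by (rule comm_step[OF F1 F2])
    finally show "\<phi> (inc_e x y) \<in> Fi (Suc i)" .
  qed
qed

lemma key:
  fixes \<phi> :: "('a::{order,finite} \<Rightarrow> 'a \<Rightarrow> 'k::field) \<Rightarrow> ('a \<Rightarrow> 'a \<Rightarrow> 'k)"
  assumes L: "\<phi> \<in> inc_LAut" and p: "fst p \<le> snd p" and nz: "\<phi> (inc_e (fst p) (snd p)) u v \<noteq> 0"
  shows "int_len (fst p) (snd p) \<le> int_len u v"
  using key_ind[OF L, of "int_len (fst p) (snd p)"] p nz unfolding Fi_def by blast

lemma tilde_eq:
  "tilde \<phi> f u v = (\<Sum>p\<in>{(x, y). x \<le> y}. f (fst p) (snd p) *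
     (if u \<le> v \<and> int_len u v = int_len (fst p) (snd p) then \<phi> (inc_e (fst p) (snd p)) u v else 0))"
  unfolding tilde_def inc_proj_def by simp

lemma tilde_in: "tilde \<phi> f \<in> inc_alg"
  unfolding inc_alg_def tilde_eq by simp

lemma tilde_hom:
  fixes \<phi> \<psi> :: "('a::{order,finite} \<Rightarrow> 'a \<Rightarrow> 'k::field) \<Rightarrow> ('a \<Rightarrow> 'a \<Rightarrow> 'k)"
  assumes L1: "\<phi> \<in> inc_LAut" and L2: "\<psi> \<in> inc_LAut" and f: "f \<in> inc_alg"
  shows "tilde (\<phi> \<circ> \<psi>) f = tilde \<phi> (tilde \<psi> f)"
proof (intro ext)
  fix u v :: 'a
  let ?P = "{(x::'a, y). x \<le> y}"
  let ?E = "\<lambda>p::'a \<times> 'a. inc_e (fst p) (snd p) :: 'a \<Rightarrow> 'a \<Rightarrow> 'k"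
  let ?L = "\<lambda>p::'a \<times> 'a. int_len (fst p) (snd p)"
  let ?F = "\<lambda>p::'a \<times> 'a. f (fst p) (snd p)"
  show "tilde (\<phi> \<circ> \<psi>) f u v = tilde \<phi> (tilde \<psi> f) u v"
  proof (cases "u \<le> v")
    case False
    then show ?thesis by (simp add: tilde_eq)
  next
    case True
    have exp: "\<phi> (\<psi> (?E p)) u v = (\<Sum>r\<in>?P. \<psi> (?E p) (fst r) (snd r) * \<phi> (?E r) u v)" if "p \<in> ?P" for p
      using expand[OF LAutD(1)[OF L1] LAut_in[OF L2 e_in]] that by auto
    have "tilde (\<phi> \<circ> \<psi>) f u v = (\<Sum>p\<in>?P. ?F p * (if int_len u v = ?L p then \<phi> (\<psi> (?E p)) u v else 0))"
      using True by (simp add: tilde_eq o_def)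
    also have "\<dots> = (\<Sum>p\<in>?P. \<Sum>r\<in>?P. ?F p * (if int_len u v = ?L p then \<psi> (?E p) (fst r) (snd r) * \<phi> (?E r) u v else 0))"
      by (intro sum.cong refl) (auto simp: exp sum_distrib_left)
    also have "\<dots> = (\<Sum>r\<in>?P. \<Sum>p\<in>?P. ?F p * (if int_len u v = ?L p then \<psi> (?E p) (fst r) (snd r) * \<phi> (?E r) u v else 0))"
      by (rule sum.swap)
    also have "\<dots> = (\<Sum>r\<in>?P. \<Sum>p\<in>?P. ?F p * (if ?L r = ?L p then \<psi> (?E p) (fst r) (snd r) else 0) *
                    (if int_len u v = ?L r then \<phi> (?E r) u v else 0))"
    proof (intro sum.cong refl)
      fix r p assume r: "r \<in> ?P" and p: "p \<in> ?P"
      show "?F p * (if int_len u v = ?L p then \<psi> (?E p) (fst r) (snd r) * \<phi> (?E r) u v else 0) =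
            ?F p * (if ?L r = ?L p then \<psi> (?E p) (fst r) (snd r) else 0) *
                    (if int_len u v = ?L r then \<phi> (?E r) u v else 0)"
      proof (cases "\<psi> (?E p) (fst r) (snd r) = 0 \<or> \<phi> (?E r) u v = 0")
        case True
        then show ?thesis by auto
      next
        case False
        then have "?L p \<le> ?L r" "?L r \<le> int_len u v"
          using key[OF L2, of p "fst r" "snd r"] key[OF L1, of r u v] p r by auto
        then show ?thesis by auto
      qed
    qed
    also have "\<dots> = (\<Sum>r\<in>?P. (\<Sum>p\<in>?P. ?F p * (if ?L r = ?L p then \<psi> (?E p) (fst r) (snd r) else 0)) *
                    (if int_len u v = ?L r then \<phi> (?E r) u v else 0))"
      by (simp add: sum_distrib_right)
    also have "\<dots> = tilde \<phi> (tilde \<psi> f) u v"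
      unfolding tilde_eq[of \<phi> "tilde \<psi> f" u v] using True
      by (intro sum.cong refl) (auto simp: tilde_eq[of \<psi> f])
    finally show ?thesis .
  qed
qed




lemma inv_LAut:
  fixes \<phi> :: "('a::{order,finite} \<Rightarrow> 'a \<Rightarrow> 'k::field) \<Rightarrow> ('a \<Rightarrow> 'a \<Rightarrow> 'k)"
  assumes L: "\<phi> \<in> inc_LAut"
  shows "inv_into inc_alg \<phi> \<in> inc_LAut"
proof -
  let ?\<psi> = "inv_into inc_alg \<phi>"
  have bij: "bij_betw \<phi> inc_alg inc_alg" using LAutD(2)[OF L] .
  have inj: "inj_on \<phi> inc_alg" and im: "\<phi> ` inc_alg = inc_alg" using bij by (auto simp: bij_betw_def)
  have add: "\<And>f g. f \<in> inc_alg \<Longrightarrow> g \<in> inc_alg \<Longrightarrow> \<phi> (inc_add f g) = inc_add (\<phi> f) (\<phi> g)"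
   and sm: "\<And>c f. f \<in> inc_alg \<Longrightarrow> \<phi> (inc_smult c f) = inc_smult c (\<phi> f)"
    using LAutD(1)[OF L] unfolding inc_linear_def by blast+
  have cm: "\<And>f g. f \<in> inc_alg \<Longrightarrow> g \<in> inc_alg \<Longrightarrow> \<phi> (inc_comm f g) = inc_comm (\<phi> f) (\<phi> g)"
    using LAutD(3)[OF L] .
  have pin: "?\<psi> f \<in> inc_alg" if "f \<in> inc_alg" for f
    using inv_into_into[of f \<phi> inc_alg] that im by simp
  have pf: "\<phi> (?\<psi> f) = f" if "f \<in> inc_alg" for f
    using f_inv_into_f[of f \<phi> inc_alg] that im by simp
  have "bij_betw ?\<psi> inc_alg inc_alg" using bij_betw_inv_into[OF bij] .
  moreover have "?\<psi> (inc_add f g) = inc_add (?\<psi> f) (?\<psi> g)" if "f \<in> inc_alg" "g \<in> inc_alg" for f g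
    by (rule inv_into_f_eq[OF inj add_closed[OF pin pin]]) (simp_all add: that add pin pf)
  moreover have "?\<psi> (inc_smult c f) = inc_smult c (?\<psi> f)" if "f \<in> inc_alg" for c f
    by (rule inv_into_f_eq[OF inj smult_closed[OF pin]]) (simp_all add: that sm pin pf)
  moreover have "?\<psi> (inc_comm f g) = inc_comm (?\<psi> f) (?\<psi> g)" if "f \<in> inc_alg" "g \<in> inc_alg" for f g
    by (rule inv_into_f_eq[OF inj comm_closed]) (simp_all add: that cm pin pf)
  ultimately show ?thesis unfolding inc_LAut_def inc_GL_def inc_linear_def by blast
qed

lemma tilde_id:
  fixes \<chi> :: "('a::{order,finite} \<Rightarrow> 'a \<Rightarrow> 'k::field) \<Rightarrow> ('a \<Rightarrow> 'a \<Rightarrow> 'k)"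
  assumes ch: "\<And>x y. x \<le> y \<Longrightarrow> \<chi> (inc_e x y) = inc_e x y" and f: "f \<in> inc_alg"
  shows "tilde \<chi> f = f"
proof (intro ext)
  fix u v :: 'a
  have "tilde \<chi> f u v = (\<Sum>p\<in>{(x, y). x \<le> y}. if p = (u, v) then f u v else 0)"
    unfolding tilde_eq
  proof (intro sum.cong refl)
    fix p :: "'a \<times> 'a" assume pP: "p \<in> {(x, y). x \<le> y}"
    then have "\<chi> (inc_e (fst p) (snd p)) = inc_e (fst p) (snd p)" using ch by auto
    then show "f (fst p) (snd p) * (if u \<le> v \<and> int_len u v = int_len (fst p) (snd p)
        then \<chi> (inc_e (fst p) (snd p)) u v else 0) = (if p = (u, v) then f u v else 0)"
      using pP by (cases p) (auto simp: inc_e_def)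
  qed
  also have "\<dots> = f u v" using f by (auto simp: sum.delta inc_alg_def)
  finally show "tilde \<chi> f u v = f u v" .
qed

lemma tilde_linear: "inc_linear (tilde \<phi>)"
  unfolding inc_linear_def
  by (auto simp: tilde_def inc_add_def inc_smult_def fun_eq_iff distrib_right sum.distrib sum_distrib_left mult.assoc)

theorem proposition4p2:
  assumes "poset_connected TYPE('a::{order,finite})"
  shows "(\<forall>\<phi>::('a \<Rightarrow> 'a \<Rightarrow> 'k::field) \<Rightarrow> ('a \<Rightarrow> 'a \<Rightarrow> 'k). \<phi> \<in> inc_LAut \<longrightarrow> tilde \<phi> \<in> inc_GL) \<and>
         (\<forall>\<phi> \<psi>::('a \<Rightarrow> 'a \<Rightarrow> 'k) \<Rightarrow> ('a \<Rightarrow> 'a \<Rightarrow> 'k). \<phi> \<in> inc_LAut \<longrightarrow> \<psi> \<in> inc_LAut \<longrightarrow>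
            (\<forall>f\<in>inc_alg. tilde (\<phi> \<circ> \<psi>) f = (tilde \<phi> \<circ> tilde \<psi>) f))"
proof (intro conjI allI impI ballI)
  fix \<phi> \<psi> :: "('a \<Rightarrow> 'a \<Rightarrow> 'k) \<Rightarrow> ('a \<Rightarrow> 'a \<Rightarrow> 'k)" and f :: "'a \<Rightarrow> 'a \<Rightarrow> 'k"
  assume "\<phi> \<in> inc_LAut" "\<psi> \<in> inc_LAut" "f \<in> inc_alg"
  then show "tilde (\<phi> \<circ> \<psi>) f = (tilde \<phi> \<circ> tilde \<psi>) f" using tilde_hom by simp
next
  fix \<phi> :: "('a \<Rightarrow> 'a \<Rightarrow> 'k) \<Rightarrow> ('a \<Rightarrow> 'a \<Rightarrow> 'k)"
  assume L: "\<phi> \<in> inc_LAut"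
  let ?\<psi> = "inv_into inc_alg \<phi>"
  have L2: "?\<psi> \<in> inc_LAut" using inv_LAut[OF L] .
  have bij: "bij_betw \<phi> inc_alg inc_alg" using LAutD(2)[OF L] .
  have inj: "inj_on \<phi> inc_alg" and im: "\<phi> ` inc_alg = inc_alg" using bij by (auto simp: bij_betw_def)
  have c1: "(\<phi> \<circ> ?\<psi>) (inc_e x y) = inc_e x y" if "x \<le> y" for x y
    using f_inv_into_f[of "inc_e x y" \<phi> inc_alg] e_in[OF that] im by simp
  have c2: "(?\<psi> \<circ> \<phi>) (inc_e x y) = inc_e x y" if "x \<le> y" for x y
    using inv_into_f_f[OF inj e_in[OF that]] by simp
  have "bij_betw (tilde \<phi>) inc_alg inc_alg"
  proof (rule bij_betw_byWitness[where f'="tilde ?\<psi>"])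
    show "\<forall>a\<in>inc_alg. tilde ?\<psi> (tilde \<phi> a) = a"
      using tilde_hom[OF L2 L] tilde_id[OF c2] by simp
    show "\<forall>a\<in>inc_alg. tilde \<phi> (tilde ?\<psi> a) = a"
      using tilde_hom[OF L L2] tilde_id[OF c1] by simp
    show "tilde \<phi> ` inc_alg \<subseteq> inc_alg" using tilde_in by blast
    show "tilde ?\<psi> ` inc_alg \<subseteq> inc_alg" using tilde_in by blast
  qed
  then show "tilde \<phi> \<in> inc_GL" unfolding inc_GL_def using tilde_linear by blast
qed


end
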